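(* Consider a power network whose graph $(\mathcal{V},\mathcal{E})$, $\mathcal{V}=\{1,\dots,n\}$, is a tree, with fixed voltage magnitudes $|V_i|=\overline{V}_i>0$ at every bus and, for every line $(i,k)\in\mathcal{E}$, a local angle constraint $\underline{\theta}_{ik}\le\theta_{ik}\le\overline{\theta}_{ik}$ with $\underline{\theta}_{ik}\in[-\pi,0]$, $\overline{\theta}_{ik}\in[0,\pi]$ (and no other constraints). Let $\mathcal{F}=\prod_{(i,k)\in\mathcal{E}}\mathcal{F}_{ik}$ be the flow region and $\mathcal{P}=\mathbf{A}\mathcal{F}$ the injection region. Then $\mathcal{O}(\mathcal{P})=\mathcal{O}(\mathrm{conv}(\mathcal{P}))$.
   Context: Each line $(i,k)\in\mathcal{E}$ has admittance $y_{ik}=g_{ik}-jb_{ik}$ with $g_{ik},b_{ik}\ge0$. For a line $(i,k)$ and angle difference $\theta_{ik}=\theta_i-\theta_k$ of the bus voltage phases, the flows are $P_{ik}=\overline{V}_i^2 g_{ik}+\overline{V}_i\overline{V}_k b_{ik}\sin\theta_{ik}-\overline{V}_i\overline{V}_k g_{ik}\cos\theta_{ik}$ and $P_{ki}=\overline{V}_k^2 g_{ik}-\overline{V}_i\overline{V}_k b_{ik}\sin\theta_{ik}-\overline{V}_i\overline{V}_k g_{ik}\cos\theta_{ik}$. The two-bus flow region $\mathcal{F}_{ik}\subset\mathbb{R}^2$ is the set of pairs $(P_{ik},P_{ki})$ obtained as $\theta_{ik}$ ranges over $[\underline{\theta}_{ik},\overline{\theta}_{ik}]$; $\mathcal{F}\subset\mathbb{R}^{2|\mathcal{E}|}$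 is the product of these sets (one coordinate per ordered pair $(i,k)$ and $(k,i)$). $\mathbf{A}$ is the $n\times 2|\mathcal{E}|$ matrix with $A(i,(k,l))=1$ if $i=k$ and $0$ otherwise, so that $(\mathbf{A}\mathbf{f})_i=P_i=\sum_{k\sim i}P_{ik}$ is the net real power injection at bus $i$. For $\mathcal{A}\subseteq\mathbb{R}^m$, $\mathcal{O}(\mathcal{A})$ is the set of Pareto-optimal points of $\mathcal{A}$ (points $x\in\mathcal{A}$ such that no $y\in\mathcal{A}$ satisfies $y\le x$ componentwise with strict inequality in some coordinate), and $\mathrm{conv}$ denotes convex hull. *)

theory Defs
  imports "HOL-Analysis.Analysis"
begin

text \<open>Buses are the elements of a finite type 'n (so n = CARD('n)).
  Lines are given as a set E of ordered pairs (i,k), each physical line listed once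
  (with a fixed orientation, to which g, b and the angle bounds refer).\<close>

definition adj :: "('n \<times> 'n) set \<Rightarrow> ('n \<times> 'n) set" where
  "adj E = E \<union> converse E"

definition simple_lines :: "('n \<times> 'n) set \<Rightarrow> bool" where
  "simple_lines E \<longleftrightarrow> (\<forall>(i,k)\<in>E. i \<noteq> k \<and> (k,i) \<notin> E)"

definition graph_connected :: "('n \<times> 'n) set \<Rightarrow> bool" where
  "graph_connected E \<longleftrightarrow> (\<forall>i j. (i,j) \<in> (adj E)\<^sup>*)"

text \<open>A tree: a connected graph in which every edge is a bridge (minimally connected,
  i.e. connected and acyclic).\<close>
definition is_tree :: "('n \<times> 'n) set \<Rightarrow> bool" where
  "is_tree E \<longleftrightarrow> simple_lines E \<and> graph_connected E \<and>
     (\<forall>e\<in>E. (fst e, snd e) \<notin> (adj (E - {e}))\<^sup>*)"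

definition Pik :: "real \<Rightarrow> real \<Rightarrow> real \<Rightarrow> real \<Rightarrow> real \<Rightarrow> real" where
  "Pik Vi Vk g b \<theta> = Vi^2 * g + Vi * Vk * b * sin \<theta> - Vi * Vk * g * cos \<theta>"

definition Pki :: "real \<Rightarrow> real \<Rightarrow> real \<Rightarrow> real \<Rightarrow> real \<Rightarrow> real" where
  "Pki Vi Vk g b \<theta> = Vk^2 * g - Vi * Vk * b * sin \<theta> - Vi * Vk * g * cos \<theta>"

definition flow_region_line ::
  "real \<Rightarrow> real \<Rightarrow> real \<Rightarrow> real \<Rightarrow> real \<Rightarrow> real \<Rightarrow> (real \<times> real) set" where
  "flow_region_line Vi Vk g b thlo thhi =
     (\<lambda>\<theta>. (Pik Vi Vk g b \<theta>, Pki Vi Vk g b \<theta>)) ` {thlo..thhi}"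

text \<open>Flow region F: flow vectors f indexed by ordered pairs (one coordinate per
  (i,k) and (k,i)); coordinates not belonging to a line are fixed to 0.\<close>
definition flow_region ::
  "('n \<times> 'n) set \<Rightarrow> ('n \<Rightarrow> real) \<Rightarrow> ('n \<times> 'n \<Rightarrow> real) \<Rightarrow> ('n \<times> 'n \<Rightarrow> real)
   \<Rightarrow> ('n \<times> 'n \<Rightarrow> real) \<Rightarrow> ('n \<times> 'n \<Rightarrow> real) \<Rightarrow> ('n \<times> 'n \<Rightarrow> real) set" where
  "flow_region E V g b thlo thhi =
     {f. (\<forall>(i,k)\<in>E. (f (i,k), f (k,i)) \<in>
            flow_region_line (V i) (V k) (g (i,k)) (b (i,k)) (thlo (i,k)) (thhi (i,k)))
         \<and> (\<forall>p. p \<notin> adj E \<longrightarrow> f p = 0)}"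

definition inj_map :: "('n::finite \<times> 'n) set \<Rightarrow> ('n \<times> 'n \<Rightarrow> real) \<Rightarrow> real ^ 'n" where
  "inj_map E f = (\<chi> i. \<Sum>p\<in>{p \<in> adj E. fst p = i}. f p)"

definition injection_region ::
  "('n::finite \<times> 'n) set \<Rightarrow> ('n \<Rightarrow> real) \<Rightarrow> ('n \<times> 'n \<Rightarrow> real) \<Rightarrow> ('n \<times> 'n \<Rightarrow> real)
   \<Rightarrow> ('n \<times> 'n \<Rightarrow> real) \<Rightarrow> ('n \<times> 'n \<Rightarrow> real) \<Rightarrow> (real ^ 'n) set" where
  "injection_region E V g b thlo thhi = inj_map E ` flow_region E V g b thlo thhi"

definition pareto :: "(real ^ 'n) set \<Rightarrow> (real ^ 'n) set" where
  "pareto A = {x \<in> A. \<not> (\<exists>y\<in>A. (\<forall>i. y $ i \<le> x $ i) \<and> (\<exists>i. y $ i < x $ i))}"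

end

theory Submission
  imports Defs
begin

lemma arcsin_le_hi:
  fixes s th h :: real
  assumes "0 \<le> s" "s \<le> sin th" "- pi \<le> th" "th \<le> h" "0 \<le> h"
  shows "arcsin s \<le> h"
proof -
  have s1: "s \<le> 1" using assms(2) sin_le_one[of th] by linarith
  show ?thesis
  proof (cases "th < 0")
    case True
    have "0 \<le> sin (-th)" using True assms(3) by (intro sin_ge_zero) auto
    hence "s = 0" using assms(1,2) by simp
    thus ?thesis using assms(5) by simp
  next
    case False
    show ?thesis
    proof (cases "th \<le> pi/2")
      case True
      have "arcsin s \<le> arcsin (sin th)"
        using assms(1,2) sin_le_one[of th] by (intro arcsin_le_arcsin) auto
      also have "\<dots> = th" using True False by (intro arcsin_sin) auto
      finally show ?thesis using assms(4) by simp
    next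
      case c2: False
      have "arcsin s \<le> pi/2" using assms(1) s1 by (intro arcsin_ubound) auto
      thus ?thesis using c2 assms(4) by linarith
    qed
  qed
qed

lemma conv_sq:
  fixes u v a d :: real
  assumes "0 \<le> u" "0 \<le> v" "u + v = 1"
  shows "(u * a + v * d)^2 \<le> u * a^2 + v * d^2"
proof -
  have v: "v = 1 - u" using assms(3) by simp
  have "u * a^2 + v * d^2 - (u * a + v * d)^2 = u * v * (a-d)^2"
    unfolding v by (simp add: power2_eq_square algebra_simps)
  moreover have "u * v * (a-d)^2 \<ge> 0" using assms by simp
  ultimately show ?thesis by linarith
qed

lemma line_down:
  fixes lo hi t1 t2 u v g b Vi Vk :: real
  assumes "-pi \<le> lo" "lo \<le> 0" "0 \<le> hi" "hi \<le> pi"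
    "lo \<le> t1" "t1 \<le> hi" "lo \<le> t2" "t2 \<le> hi"
    "0 \<le> u" "0 \<le> v" "u + v = 1" "0 \<le> g" "0 \<le> Vi * Vk"
  shows "\<exists>th. lo \<le> th \<and> th \<le> hi \<and>
     Pik Vi Vk g b th \<le> u * Pik Vi Vk g b t1 + v * Pik Vi Vk g b t2 \<and>
     Pki Vi Vk g b th \<le> u * Pki Vi Vk g b t1 + v * Pki Vi Vk g b t2"
proof -
  define s where "s = u * sin t1 + v * sin t2"
  define k where "k = u * cos t1 + v * cos t2"
  have "u * sin t1 \<le> u" "v * sin t2 \<le> v" "-u \<le> u * sin t1" "-v \<le> v * sin t2"
    using assms(9,10) mult_left_mono[OF sin_le_one, of u t1] mult_left_mono[OF sin_le_one, of v t2]
      mult_left_mono[OF sin_ge_minus_one, of u t1] mult_left_mono[OF sin_ge_minus_one, of v t2]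
    by auto
  hence s1: "-1 \<le> s" "s \<le> 1" using assms(11) unfolding s_def by linarith+
  have "s^2 \<le> u * (sin t1)^2 + v * (sin t2)^2" unfolding s_def using assms(9,10,11) by (rule conv_sq)
  moreover have "k^2 \<le> u * (cos t1)^2 + v * (cos t2)^2" unfolding k_def using assms(9,10,11) by (rule conv_sq)
  moreover have "u * (sin t1)^2 + v * (sin t2)^2 + (u * (cos t1)^2 + v * (cos t2)^2)
      = u * ((sin t1)^2 + (cos t1)^2) + v * ((sin t2)^2 + (cos t2)^2)"
    by (simp only: distrib_left add.assoc add.left_commute)
  moreover have "u * ((sin t1)^2 + (cos t1)^2) + v * ((sin t2)^2 + (cos t2)^2) = 1"
    using assms(11) by simp
  ultimately have sk: "k^2 \<le> 1 - s^2" by linarith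
  define th where "th = arcsin s"
  have sth: "sin th = s" unfolding th_def using s1 by simp
  have cth: "k \<le> cos th" unfolding th_def using s1 sk by (simp add: cos_arcsin real_le_rsqrt)
  have hi: "th \<le> hi"
  proof (cases "0 \<le> s")
    case True
    have "sin t1 \<ge> s \<or> sin t2 \<ge> s"
    proof (rule ccontr)
      assume "\<not> ?thesis"
      hence "u * sin t1 \<le> u * s" "v * sin t2 \<le> v * s" using assms(9,10)
        by (auto intro: mult_left_mono)
      moreover have "u * sin t1 < u * s \<or> v * sin t2 < v * s"
        using assms(9,10,11) \<open>\<not> _\<close> by (cases "u = 0") (auto intro: mult_strict_left_mono)
      ultimately have "s < u * s + v * s" unfolding s_def by linarith
      moreover have "u * s + v * s = (u + v) * s" by (simp add: algebra_simps)
      ultimately show False using assms(11) by simp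
    qed
    then obtain t where t: "s \<le> sin t" "lo \<le> t" "t \<le> hi" using assms by blast
    show ?thesis unfolding th_def
      using arcsin_le_hi[OF True t(1) _ t(3) assms(3)] t(2) assms(1) by linarith
  next
    case False
    have "arcsin s \<le> arcsin 0" using s1 False by (intro arcsin_le_arcsin) auto
    thus ?thesis unfolding th_def using assms(3) by simp
  qed
  have lo: "lo \<le> th"
  proof (cases "s \<le> 0")
    case True
    have "sin t1 \<le> s \<or> sin t2 \<le> s"
    proof (rule ccontr)
      assume "\<not> ?thesis"
      hence "u * s \<le> u * sin t1" "v * s \<le> v * sin t2" using assms(9,10)
        by (auto intro: mult_left_mono)
      moreover have "u * s < u * sin t1 \<or> v * s < v * sin t2"
        using assms(9,10,11) \<open>\<not> _\<close> by (cases "u = 0") (auto intro: mult_strict_left_mono)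
      ultimately have "u * s + v * s < s" unfolding s_def by linarith
      moreover have "u * s + v * s = (u + v) * s" by (simp add: algebra_simps)
      ultimately show False using assms(11) by simp
    qed
    then obtain t where t: "sin t \<le> s" "lo \<le> t" "t \<le> hi" using assms by blast
    have "arcsin (-s) \<le> -lo"
      using t True assms(1,2,4) by (intro arcsin_le_hi[of _ "-t"]) auto
    thus ?thesis unfolding th_def using s1 arcsin_minus[of s] by simp
  next
    case False
    have "arcsin 0 \<le> arcsin s" using s1 False by (intro arcsin_le_arcsin) auto
    thus ?thesis unfolding th_def using assms(2) by simp
  qed
  have c: "Vi * Vk * g * k \<le> Vi * Vk * g * cos th" using cth assms(12,13)
    by (intro mult_left_mono) auto
  have e1: "u * Pik Vi Vk g b t1 + v * Pik Vi Vk g b t2 = Vi^2 * g + Vi * Vk * b * s - Vi * Vk * g * k"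
  proof -
    have "u * Pik Vi Vk g b t1 + v * Pik Vi Vk g b t2 = (u+v)*(Vi^2 * g) + Vi * Vk * b * s - Vi * Vk * g * k"
      unfolding Pik_def s_def k_def by (simp add: algebra_simps)
    thus ?thesis using assms(11) by simp
  qed
  have e2: "u * Pki Vi Vk g b t1 + v * Pki Vi Vk g b t2 = Vk^2 * g - Vi * Vk * b * s - Vi * Vk * g * k"
  proof -
    have "u * Pki Vi Vk g b t1 + v * Pki Vi Vk g b t2 = (u+v)*(Vk^2 * g) - Vi * Vk * b * s - Vi * Vk * g * k"
      unfolding Pki_def s_def k_def by (simp add: algebra_simps)
    thus ?thesis using assms(11) by simp
  qed
  show ?thesis
    by (rule exI[of _ th]) (use hi lo c e1 e2 sth in \<open>auto simp: Pik_def Pki_def\<close>)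
qed

lemma inj_map_comb:
  "inj_map E (\<lambda>p. u * f1 p + v * f2 p) = u *\<^sub>R inj_map E f1 + v *\<^sub>R inj_map E f2"
  by (simp add: inj_map_def vec_eq_iff sum.distrib sum_distrib_left)

lemma inj_map_mono:
  "(\<And>p. f p \<le> f' p) \<Longrightarrow> inj_map E f $ i \<le> inj_map E f' $ i"
  by (simp add: inj_map_def sum_mono)

lemma flow_down:
  fixes E :: "('n::finite \<times> 'n) set"
    and V :: "'n \<Rightarrow> real"
    and g b thlo thhi :: "'n \<times> 'n \<Rightarrow> real"
  assumes sl: "simple_lines E"
    and V: "\<forall>i. V i > 0"
    and gb: "\<forall>e\<in>E. g e \<ge> 0 \<and> b e \<ge> 0"
    and lo: "\<forall>e\<in>E. - pi \<le> thlo e \<and> thlo e \<le> 0"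
    and hi: "\<forall>e\<in>E. 0 \<le> thhi e \<and> thhi e \<le> pi"
    and f1: "f1 \<in> flow_region E V g b thlo thhi"
    and f2: "f2 \<in> flow_region E V g b thlo thhi"
    and uv: "0 \<le> u" "0 \<le> v" "u + v = 1"
  shows "\<exists>f\<in>flow_region E V g b thlo thhi. \<forall>p. f p \<le> u * f1 p + v * f2 p"
proof -
  have "\<forall>e\<in>E. \<exists>th. thlo e \<le> th \<and> th \<le> thhi e \<and>
      Pik (V (fst e)) (V (snd e)) (g e) (b e) th \<le> u * f1 e + v * f2 e \<and>
      Pki (V (fst e)) (V (snd e)) (g e) (b e) th \<le> u * f1 (snd e, fst e) + v * f2 (snd e, fst e)"
  proof (intro ballI)
    fix e assume e: "e \<in> E"
    obtain i k where ik: "e = (i,k)" by (cases e)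
    from f1 e ik obtain t1 where t1: "thlo e \<le> t1" "t1 \<le> thhi e"
      "f1 (i,k) = Pik (V i) (V k) (g e) (b e) t1" "f1 (k,i) = Pki (V i) (V k) (g e) (b e) t1"
      unfolding flow_region_def flow_region_line_def by fastforce
    from f2 e ik obtain t2 where t2: "thlo e \<le> t2" "t2 \<le> thhi e"
      "f2 (i,k) = Pik (V i) (V k) (g e) (b e) t2" "f2 (k,i) = Pki (V i) (V k) (g e) (b e) t2"
      unfolding flow_region_def flow_region_line_def by fastforce
    have "0 \<le> V i * V k" using V by (simp add: less_imp_le)
    from line_down[OF _ _ _ _ t1(1,2) t2(1,2) uv _ this, of "g e" "b e"]
    show "\<exists>th. thlo e \<le> th \<and> th \<le> thhi e \<and>
      Pik (V (fst e)) (V (snd e)) (g e) (b e) th \<le> u * f1 e + v * f2 e \<and>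
      Pki (V (fst e)) (V (snd e)) (g e) (b e) th \<le> u * f1 (snd e, fst e) + v * f2 (snd e, fst e)"
      using lo hi gb e ik t1 t2 by auto
  qed
  then obtain th where th: "\<forall>e\<in>E. thlo e \<le> th e \<and> th e \<le> thhi e \<and>
      Pik (V (fst e)) (V (snd e)) (g e) (b e) (th e) \<le> u * f1 e + v * f2 e \<and>
      Pki (V (fst e)) (V (snd e)) (g e) (b e) (th e) \<le> u * f1 (snd e, fst e) + v * f2 (snd e, fst e)"
    by metis
  define f where "f p = (if p \<in> E then Pik (V (fst p)) (V (snd p)) (g p) (b p) (th p)
     else if (snd p, fst p) \<in> E then Pki (V (snd p)) (V (fst p)) (g (snd p, fst p)) (b (snd p, fst p)) (th (snd p, fst p))
     else 0)" for p
  have "f \<in> flow_region E V g b thlo thhi"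
    unfolding flow_region_def
  proof (intro CollectI conjI ballI allI impI)
    fix e assume e: "e \<in> E"
    obtain i k where ik: "e = (i,k)" by (cases e)
    have "(k,i) \<notin> E" "i \<noteq> k" using sl e ik unfolding simple_lines_def by auto
    then show "case e of (i, k) \<Rightarrow> (f (i, k), f (k, i))
         \<in> flow_region_line (V i) (V k) (g (i, k)) (b (i, k)) (thlo (i, k)) (thhi (i, k))"
      using e ik th unfolding flow_region_line_def f_def by auto
  next
    fix p assume "p \<notin> adj E"
    then show "f p = 0" unfolding f_def adj_def by (cases p) auto
  qed
  moreover have "\<forall>p. f p \<le> u * f1 p + v * f2 p"
  proof
    fix p
    show "f p \<le> u * f1 p + v * f2 p"
    proof (cases "p \<in> E")
      case True thus ?thesis using th unfolding f_def by auto
    next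
      case nE: False
      show ?thesis
      proof (cases "(snd p, fst p) \<in> E")
        case True thus ?thesis using th nE unfolding f_def by fastforce
      next
        case False
        hence "p \<notin> adj E" using nE unfolding adj_def by (cases p) auto
        hence "f1 p = 0" "f2 p = 0" using f1 f2 unfolding flow_region_def by (cases p, auto)+
        thus ?thesis using False nE unfolding f_def by simp
      qed
    qed
  qed
  ultimately show ?thesis by blast
qed

theorem lemma2:
  fixes E :: "('n::finite \<times> 'n) set"
    and V :: "'n \<Rightarrow> real"
    and g b thlo thhi :: "'n \<times> 'n \<Rightarrow> real"
  assumes "is_tree E"
    and "\<forall>i. V i > 0"
    and "\<forall>e\<in>E. g e \<ge> 0 \<and> b e \<ge> 0"
    and "\<forall>e\<in>E. - pi \<le> thlo e \<and> thlo e \<le> 0"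
    and "\<forall>e\<in>E. 0 \<le> thhi e \<and> thhi e \<le> pi"
  shows "pareto (injection_region E V g b thlo thhi)
         = pareto (convex hull (injection_region E V g b thlo thhi))"
proof -
  let ?F = "flow_region E V g b thlo thhi"
  let ?P = "injection_region E V g b thlo thhi"
  have sl: "simple_lines E" using assms(1) unfolding is_tree_def by simp
  define U where "U = {y. \<exists>x\<in>?P. \<forall>i. x $ i \<le> y $ i}"
  have "convex U"
  proof (rule convexI)
    fix x y :: "real ^ 'n" and u v :: real
    assume x: "x \<in> U" and y: "y \<in> U" and uv0: "0 \<le> u" "0 \<le> v" "u + v = 1"
    hence uv: "0 \<le> u \<and> 0 \<le> v \<and> u + v = 1" by simp
    from x obtain f1 where f1: "f1 \<in> ?F" "\<forall>i. inj_map E f1 $ i \<le> x $ i"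
      unfolding U_def injection_region_def by auto
    from y obtain f2 where f2: "f2 \<in> ?F" "\<forall>i. inj_map E f2 $ i \<le> y $ i"
      unfolding U_def injection_region_def by auto
    obtain f where f: "f \<in> ?F" "\<forall>p. f p \<le> u * f1 p + v * f2 p"
      using flow_down[OF sl assms(2-5) f1(1) f2(1), of u v] uv by auto
    have "\<forall>i. inj_map E f $ i \<le> (u *\<^sub>R x + v *\<^sub>R y) $ i"
    proof
      fix i
      have "inj_map E f $ i \<le> inj_map E (\<lambda>p. u * f1 p + v * f2 p) $ i"
        using f(2) by (intro inj_map_mono) auto
      also have "\<dots> = u * inj_map E f1 $ i + v * inj_map E f2 $ i"
        by (simp add: inj_map_comb)
      also have "\<dots> \<le> u * x $ i + v * y $ i"
        using f1(2) f2(2) uv by (intro add_mono mult_left_mono) auto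
      finally show "inj_map E f $ i \<le> (u *\<^sub>R x + v *\<^sub>R y) $ i" by simp
    qed
    thus "u *\<^sub>R x + v *\<^sub>R y \<in> U"
      unfolding U_def injection_region_def using f(1) by auto
  qed
  moreover have "?P \<subseteq> U" unfolding U_def by auto
  ultimately have key: "convex hull ?P \<subseteq> U" by (rule hull_minimal[rotated])
  have sub: "?P \<subseteq> convex hull ?P" by (rule hull_subset)
  show ?thesis
  proof
    show "pareto ?P \<subseteq> pareto (convex hull ?P)"
    proof
      fix x assume x: "x \<in> pareto ?P"
      show "x \<in> pareto (convex hull ?P)"
        unfolding pareto_def
      proof (intro CollectI conjI notI)
        show "x \<in> convex hull ?P" using x sub unfolding pareto_def by auto
      next
        assume "\<exists>y\<in>convex hull ?P. (\<forall>i. y $ i \<le> x $ i) \<and> (\<exists>i. y $ i < x $ i)"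
        then obtain y j where y: "y \<in> convex hull ?P" "\<forall>i. y $ i \<le> x $ i" "y $ j < x $ j"
          by auto
        from y(1) key obtain z where z: "z \<in> ?P" "\<forall>i. z $ i \<le> y $ i" unfolding U_def by auto
        have "(\<forall>i. z $ i \<le> x $ i) \<and> (\<exists>i. z $ i < x $ i)"
          using y z by (meson order_trans le_less_trans)
        thus False using x z(1) unfolding pareto_def by auto
      qed
    qed
  next
    show "pareto (convex hull ?P) \<subseteq> pareto ?P"
    proof
      fix x assume x: "x \<in> pareto (convex hull ?P)"
      hence xc: "x \<in> convex hull ?P" unfolding pareto_def by auto
      from xc key obtain z where z: "z \<in> ?P" "\<forall>i. z $ i \<le> x $ i" unfolding U_def by auto
      have "\<not> (\<exists>i. z $ i < x $ i)"
        using x z sub unfolding pareto_def by blast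
      hence "z = x" using z(2) by (simp add: vec_eq_iff) (meson antisym not_le)
      hence xP: "x \<in> ?P" using z(1) by simp
      show "x \<in> pareto ?P" using x xP sub unfolding pareto_def by blast
    qed
  qed
qed

end
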